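(* Let $k$ be an algebraically closed field of characteristic zero and let $m\geq 1$ be an integer. There exists an irreducible polynomial $\xi_m\in k[x,y]$, unique up to multiplication by a nonzero constant, such that (1) $\xi_m$ vanishes to order $m$ at the point $t_0=(1,1)$, and (2) the Newton polygon of $\xi_m$ is the triangle with vertices $(0,0)$, $(m-1,0)$, $(m,m+1)$.
   Context: The Newton polygon of a polynomial $\sum c_{ij}x^iy^j$ is the convex hull of the exponents $(i,j)$ with $c_{ij}\neq 0$. *)

theory Defs
  imports "HOL-Analysis.Analysis" "HOL-Computational_Algebra.Computational_Algebra"
begin

text \<open>Bivariate polynomials k[x,y] are represented as k[x][y], i.e. type 'a poly poly:
  the outer variable is y, the inner variable is x.\<close>

definition alg_closed :: "'a::field itself \<Rightarrow> bool" where
  "alg_closed _ \<longleftrightarrow> (\<forall>p::'a poly. degree p > 0 \<longrightarrow> (\<exists>z. poly p z = 0))"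

definition bcoeff :: "'a::zero poly poly \<Rightarrow> nat \<Rightarrow> nat \<Rightarrow> 'a" where
  "bcoeff p i j = coeff (coeff p j) i"

text \<open>Translate: p(x + a, y + b).\<close>
definition bshift :: "'a::comm_ring_1 poly poly \<Rightarrow> 'a \<Rightarrow> 'a \<Rightarrow> 'a poly poly" where
  "bshift p a b = pcompose (map_poly (\<lambda>q. pcompose q [:a, 1:]) p) [:[:b:], 1:]"

definition vanishes_to_order :: "'a::comm_ring_1 poly poly \<Rightarrow> 'a \<times> 'a \<Rightarrow> nat \<Rightarrow> bool" where
  "vanishes_to_order p t m \<longleftrightarrow>
     (\<forall>i j. i + j < m \<longrightarrow> bcoeff (bshift p (fst t) (snd t)) i j = 0) \<and>
     (\<exists>i j. i + j = m \<and> bcoeff (bshift p (fst t) (snd t)) i j \<noteq> 0)"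

definition newton_polygon :: "'a::zero poly poly \<Rightarrow> (real \<times> real) set" where
  "newton_polygon p = convex hull {(real i, real j) | i j. bcoeff p i j \<noteq> 0}"

end

theory Submission
  imports Defs
begin

lemma map_poly_pc_add:
  "map_poly (\<lambda>s. pcompose s r) (p + q) = map_poly (\<lambda>s. pcompose s r) p + map_poly (\<lambda>s. pcompose s r) q"
  by (intro poly_eqI) (simp add: coeff_map_poly pcompose_add)

lemma map_poly_pc_diff:
  fixes r :: "'a::comm_ring_1 poly"
  shows "map_poly (\<lambda>s. pcompose s r) (p - q) = map_poly (\<lambda>s. pcompose s r) p - map_poly (\<lambda>s. pcompose s r) q"
  by (intro poly_eqI) (simp add: coeff_map_poly pcompose_diff)

lemma map_poly_pc_mult:
  fixes r :: "'a::comm_ring_1 poly"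
  shows "map_poly (\<lambda>s. pcompose s r) (p * q) = map_poly (\<lambda>s. pcompose s r) p * map_poly (\<lambda>s. pcompose s r) q"
proof (induction p)
  case 0 then show ?case by simp
next
  case (pCons a p)
  have "map_poly (\<lambda>s. pcompose s r) (pCons a p * q) = map_poly (\<lambda>s. pcompose s r) (smult a q + pCons 0 (p*q))" by simp
  also have "\<dots> = smult (pcompose a r) (map_poly (\<lambda>s. pcompose s r) q) + pCons 0 (map_poly (\<lambda>s. pcompose s r) p * map_poly (\<lambda>s. pcompose s r) q)"
    by (simp add: map_poly_pc_add map_poly_smult pcompose_mult map_poly_pCons pCons.IH)
  also have "\<dots> = map_poly (\<lambda>s. pcompose s r) (pCons a p) * map_poly (\<lambda>s. pcompose s r) q"
    by (simp add: map_poly_pCons)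
  finally show ?case .
qed

definition BB :: "'a::comm_ring_1 poly poly \<Rightarrow> 'a poly poly" where "BB p = bshift p 1 1"

lemma BB_mult: "BB (p * q) = BB p * BB q"
  by (simp add: BB_def bshift_def map_poly_pc_mult pcompose_mult)
lemma BB_add: "BB (p + q) = BB p + BB q"
  by (simp add: BB_def bshift_def map_poly_pc_add pcompose_add)
lemma BB_diff: "BB (p - q) = BB p - BB q"
  by (simp add: BB_def bshift_def map_poly_pc_diff pcompose_diff)
lemma BB_1: "BB 1 = 1"
  by (simp add: BB_def bshift_def pcompose_1)
lemma BB_power: "BB (p ^ n) = BB p ^ n"
  by (induction n) (simp_all add: BB_1 BB_mult)
lemma BB_const: "BB [:[:c:]:] = [:[:c:]:]"
  by (simp add: BB_def bshift_def map_poly_pCons pcompose_pCons)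
lemma BB_X: "BB [:[:0,1:]:] = [:[:1,1:]:]"
  by (simp add: BB_def bshift_def pcompose_pCons map_poly_pCons)
lemma BB_Y: "BB [:0,1:] = [:1,1:]"
  by (simp add: BB_def bshift_def pcompose_pCons map_poly_pCons one_pCons)
lemma BB_lin: "BB [:[:1,-1:]:] = [:[:0,-1:]:]"
  by (simp add: BB_def bshift_def pcompose_pCons map_poly_pCons)

definition low :: "'a::comm_ring_1 poly poly \<Rightarrow> nat \<Rightarrow> bool" where
  "low q n \<longleftrightarrow> (\<forall>a b. a + b < n \<longrightarrow> bcoeff q a b = 0)"

lemma bcoeff_mult: "bcoeff (p*q) I J = (\<Sum>j\<le>J. \<Sum>i\<le>I. bcoeff p i j * bcoeff q (I-i) (J-j))"
  by (simp add: bcoeff_def coeff_mult coeff_sum)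

lemma low_mult: assumes "low p n1" "low q n2" shows "low (p*q) (n1+n2)"
  unfolding low_def
proof (intro allI impI)
  fix a b assume ab: "a + b < n1 + n2"
  show "bcoeff (p*q) a b = 0" unfolding bcoeff_mult
  proof (intro sum.neutral ballI)
    fix j i assume j: "j \<in> {..b}" and i: "i \<in> {..a}"
    show "bcoeff p i j * bcoeff q (a - i) (b - j) = 0"
    proof (cases "i + j < n1")
      case True then show ?thesis using assms(1) by (simp add: low_def)
    next
      case False
      then have "(a - i) + (b - j) < n2" using i j ab by auto
      then show ?thesis using assms(2) by (simp add: low_def)
    qed
  qed
qed

lemma low_0: "low q 0" by (simp add: low_def)
lemma low_mono: "low q n \<Longrightarrow> k \<le> n \<Longrightarrow> low q k" by (auto simp: low_def)
lemma low_diff: "low p n \<Longrightarrow> low q n \<Longrightarrow> low (p - q) n" by (simp add: low_def bcoeff_def)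
lemma low_add: "low p n \<Longrightarrow> low q n \<Longrightarrow> low (p + q) n" by (simp add: low_def bcoeff_def)
lemma low_power: "low p 1 \<Longrightarrow> low (p ^ k) k"
proof (induction k)
  case 0 then show ?case by (simp add: low_0)
next
  case (Suc k) then show ?case using low_mult[of p 1 "p^k" k] by simp
qed
lemma low_1_iff: "low p 1 \<longleftrightarrow> bcoeff p 0 0 = 0" by (simp add: low_def)

lemma bcoeff_X_mult: "bcoeff ([:[:0,1:]:] * (q::'a::comm_ring_1 poly poly)) (Suc a) b = bcoeff q a b"
  by (simp add: bcoeff_def coeff_pCons)

lemma bcoeff_const_mult: "bcoeff ([:[:c:]:] * q) a b = c * bcoeff q a b"
  by (simp add: bcoeff_def)

lemma const_poly_pow: "[:c:] ^ n = [:c ^ n:]"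
  by (induction n) (simp_all add: mult.commute)

lemma coeff_lin_pow:
  fixes a b :: "'a::comm_semiring_1"
  shows "coeff ([:a, b:] ^ n) i = (if i \<le> n then of_nat (n choose i) * b ^ i * a ^ (n - i) else 0)"
proof (cases "i \<le> n")
  case True then show ?thesis by (simp add: coeff_linear_poly_power)
next
  case False
  have "degree ([:a, b:] ^ n) \<le> degree [:a,b:] * n" by (rule degree_power_le)
  also have "\<dots> \<le> n" by simp
  finally show ?thesis using False by (simp add: coeff_eq_0)
qed

lemma coeff_xpow: "coeff ([:0, 1::'a::comm_semiring_1:] ^ n) i = (if i = n then 1 else 0)"
  using monom_altdef[of "1::'a" n] by (metis coeff_monom smult_1_left)

definition cf :: "nat \<Rightarrow> nat \<Rightarrow> nat \<Rightarrow> 'a::comm_ring_1" where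
  "cf m i j = (if i = m \<and> j = Suc m then 1 else if j \<le> i \<and> i < m then (-1)^(m-j) * of_nat (Suc m choose j) else 0)"

definition xi :: "nat \<Rightarrow> 'a::comm_ring_1 poly poly" where
  "xi m = Poly (map (\<lambda>j. Poly (map (\<lambda>i. cf m i j) [0..<Suc m])) [0..<Suc (Suc m)])"

lemma coeff_Poly_map_upt: "coeff (Poly (map g [0..<n])) i = (if i < n then g i else 0)"
  by (simp add: nth_default_def del: upt_Suc)

lemma bcoeff_xi: "bcoeff (xi m) i j = cf m i j"
proof -
  have "bcoeff (xi m) i j = (if j < Suc (Suc m) then (if i < Suc m then cf m i j else 0) else 0)"
    unfolding bcoeff_def xi_def by (simp only: coeff_Poly_map_upt if_distrib[of "\<lambda>p. coeff p i"] coeff_0)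
  then show ?thesis by (auto simp: cf_def)
qed

lemma coeff_const_mult: "coeff ([:c:] * p) i = c * coeff p i"
  by simp

lemma poly_sign_const: "(of_nat n * (-1)^k :: 'a::comm_ring_1 poly) = [:of_nat n * (-1)^k:]"
proof -
  have "(-1 :: 'a poly) = [:-1:]" by (simp add: one_pCons)
  then have "((-1)^k :: 'a poly) = [:(-1)^k:]" by (simp add: const_poly_pow)
  then show ?thesis by (simp add: of_nat_poly)
qed

lemma neg_one_poly: "[:-1::'a::comm_ring_1:] = -1"
  by (simp add: one_pCons)

lemma bcoeff_N:
  fixes m :: nat
  shows "bcoeff ([:[:0,1:]:]^m * [:-1,1:]^(Suc m) - [:[:-1:], [:0,1::'a::comm_ring_1:]:]^(Suc m)) i j
    = (if j \<le> Suc m then of_nat (Suc m choose j) * (-1)^(Suc m - j) * ((if i = m then 1 else 0) - (if i = j then 1 else 0)) else 0)"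
proof -
  have P1: "coeff ([:-1,1:]^(Suc m) :: 'a poly poly) j = (if j \<le> Suc m then of_nat (Suc m choose j) * (-1)^(Suc m - j) else 0)"
    by (simp add: coeff_lin_pow del: power_Suc)
  have P2: "coeff ([:[:-1:],[:0,1::'a:]:]^(Suc m)) j = (if j \<le> Suc m then (of_nat (Suc m choose j) * (-1)^(Suc m - j)) * [:0,1:]^j else 0)"
    by (simp add: coeff_lin_pow mult_ac neg_one_poly del: power_Suc)
  have P3: "coeff ([:[:0,1::'a:]:]^m * Q) j = [:0,1:]^m * coeff Q j" for Q
    by (simp add: const_poly_pow)
  show ?thesis
  proof (cases "j \<le> Suc m")
    case True
    have "bcoeff ([:[:0,1:]:]^m * [:-1,1:]^(Suc m) - [:[:-1:], [:0,1::'a::comm_ring_1:]:]^(Suc m)) i j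
      = coeff ([:0,1:]^m * [:of_nat (Suc m choose j) * (-1)^(Suc m - j):]) i - coeff ([:of_nat (Suc m choose j) * (-1)^(Suc m - j):] * [:0,1:]^j) i"
      unfolding bcoeff_def coeff_diff P3 P1 P2 using True by (simp only: if_True poly_sign_const)
    also have "\<dots> = of_nat (Suc m choose j) * (-1)^(Suc m - j) * ((if i = m then 1 else 0) - (if i = j then 1 else 0))"
      by (simp only: mult.commute[of "[:0,1:]^m"] coeff_const_mult coeff_xpow) (simp add: algebra_simps)
    finally show ?thesis using True by simp
  next
    case False
    then show ?thesis unfolding bcoeff_def coeff_diff P3 P1 P2 by simp
  qed
qed

lemma bcoeff_lin_mult:
  "bcoeff ([:[:1,-1:]:] * (q::'a::comm_ring_1 poly poly)) i j = (if i = 0 then bcoeff q 0 j else bcoeff q i j - bcoeff q (i - 1) j)"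
  by (cases i) (simp_all add: bcoeff_def coeff_pCons)

lemma cf_step:
  "(if i = 0 then cf m 0 j else cf m i j - cf m (i - 1) j)
   = (if j \<le> Suc m then of_nat (Suc m choose j) * (-1)^(Suc m - j) * ((if i = m then 1 else 0) - (if i = j then 1 else 0)) else (0::'a::comm_ring_1))"
proof (cases "j \<le> m")
  case True
  have s: "(-1::'a)^(Suc m - j) = - ((-1)^(m-j))" using True by (simp add: Suc_diff_le)
  show ?thesis
  proof (cases "i = 0")
    case True
    then show ?thesis using \<open>j \<le> m\<close> s by (cases "m = 0") (auto simp: cf_def)
  next
    case False
    then show ?thesis using \<open>j \<le> m\<close> s by (auto simp: cf_def)
  qed
next
  case False
  then consider "j = Suc m" | "j > Suc m" by linarith
  then show ?thesis
  proof cases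
    case 1 then show ?thesis by (cases "i = 0") (auto simp: cf_def)
  next
    case 2 then show ?thesis by (cases "i = 0") (auto simp: cf_def)
  qed
qed

lemma xi_id:
  "[:[:1,-1:]:] * xi m = [:[:0,1:]:]^m * [:-1,1:]^(Suc m) - [:[:-1:], [:0,1::'a::comm_ring_1:]:]^(Suc m)"
proof (intro poly_eqI)
  fix j i
  have "bcoeff ([:[:1,-1:]:] * xi m) i j = bcoeff ([:[:0,1:]:]^m * [:-1,1:]^(Suc m) - [:[:-1:], [:0,1::'a::comm_ring_1:]:]^(Suc m)) i j"
    unfolding bcoeff_N bcoeff_lin_mult bcoeff_xi cf_step ..
  then show "coeff (coeff ([:[:1,-1:]:] * xi m) j) i = coeff (coeff ([:[:0,1:]:]^m * [:-1,1:]^(Suc m) - [:[:-1:], [:0,1::'a::comm_ring_1:]:]^(Suc m)) j) i"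
    by (simp only: bcoeff_def)
qed

lemma xi_id':
  "[:[:1,-1:]:] * xi m = [:[:0,1:]:]^m * ([:0,1:] - 1)^(Suc m) - ([:[:0,1:]:] * [:0,1:] - 1)^(Suc m)"
proof -
  have 1: "([:0,1:] - 1 :: 'a poly poly) = [:-1,1:]" by (simp add: one_pCons)
  have 2: "([:[:0,1:]:] * [:0,1:] - 1 :: 'a poly poly) = [:[:-1:],[:0,1:]:]" by (simp add: one_pCons)
  show ?thesis unfolding 1 2 by (rule xi_id)
qed

lemma BB_xi_eq:
  "[:[:0,-1:]:] * BB (xi m) = [:[:1,1:]:]^m * [:0,1:]^(Suc m) - ([:[:1,1:]:] * [:1,1::'a::comm_ring_1 poly:] - 1)^(Suc m)"
proof -
  have e: "BB ([:[:1,-1:]:] * xi m) = BB ([:[:0,1:]:]^m * ([:0,1:] - 1)^(Suc m) - ([:[:0,1:]:] * [:0,1:] - 1)^(Suc m))"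
    by (simp only: xi_id')
  have h: "([:1,1:] - 1 :: 'a poly poly) = [:0,1:]" by (simp add: one_pCons)
  have r: "BB ([:[:0,1:]:]^m * ([:0,1:] - 1)^(Suc m) - ([:[:0,1:]:] * [:0,1:] - 1)^(Suc m))
     = [:[:1,1:]:]^m * [:0,1:]^(Suc m) - ([:[:1,1:]:] * [:1,1::'a poly:] - 1)^(Suc m)"
    by (simp only: BB_diff BB_mult BB_power BB_X BB_Y BB_1 h)
  have "[:[:0,-1:]:] * BB (xi m) = BB ([:[:1,-1:]:] * xi m)" by (simp only: BB_mult BB_lin)
  also have "\<dots> = BB ([:[:0,1:]:]^m * ([:0,1:] - 1)^(Suc m) - ([:[:0,1:]:] * [:0,1:] - 1)^(Suc m))" by (rule e)
  also have "\<dots> = [:[:1,1:]:]^m * [:0,1:]^(Suc m) - ([:[:1,1:]:] * [:1,1::'a poly:] - 1)^(Suc m)" by (rule r)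
  finally show ?thesis .
qed

lemma xi_vanish:
  fixes m :: nat
  shows "vanishes_to_order (xi m :: 'a::idom poly poly) (1, 1) m"
proof -
  define Xi where "Xi = BB (xi m :: 'a poly poly)"
  define W where "W = ([:[:1,1:]:] * [:1,1::'a poly:] - 1)"
  have eq: "[:[:0,-1:]:] * Xi = [:[:1,1:]:]^m * [:0,1:]^(Suc m) - W^(Suc m)"
    unfolding Xi_def W_def by (rule BB_xi_eq)
  have lW: "low W 1" unfolding low_1_iff W_def by (simp add: bcoeff_def one_pCons)
  have lY: "low ([:0,1::'a poly:]) 1" unfolding low_1_iff by (simp add: bcoeff_def)
  have "low ([:[:1,1:]:]^m * [:0,1:]^(Suc m) - W^(Suc m)) (Suc m)"
    using low_mult[OF low_0 low_power[OF lY], of "[:[:1,1:]:]^m" "Suc m"] low_power[OF lW, of "Suc m"]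
    by (intro low_diff) simp_all
  then have lo: "low ([:[:0,-1:]:] * Xi) (Suc m)" by (simp only: eq)
  have A: "bcoeff Xi a b = 0" if "a + b < m" for a b
  proof -
    have "bcoeff ([:[:0,-1:]:] * Xi) (Suc a) b = 0" using lo that by (simp add: low_def)
    then show ?thesis by (simp add: bcoeff_def coeff_pCons)
  qed
  have "coeff ([:[:0,-1:]:] * Xi) 0 = coeff ([:[:1,1:]:]^m * [:0,1:]^(Suc m) - W^(Suc m)) 0"
    by (simp only: eq)
  then have "[:0, - 1:] * coeff Xi 0 = - ((coeff W 0) ^ Suc m)"
    by (simp only: coeff_mult_0 coeff_diff coeff_0_power) simp
  moreover have "coeff W 0 = [:0,1:]" unfolding W_def by (simp add: one_pCons)
  ultimately have "[:0,1:] * coeff Xi 0 = [:0,1:] * [:0,1:]^m" by (simp add: one_pCons)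
  then have c0: "coeff Xi 0 = [:0,1:]^m" by simp
  have one: "bcoeff Xi m 0 = 1" unfolding bcoeff_def c0 by (simp add: coeff_xpow)
  show ?thesis unfolding vanishes_to_order_def fst_conv snd_conv BB_def[symmetric] Xi_def[symmetric]
  proof (intro conjI allI impI)
    fix i j assume "i + j < m" then show "bcoeff Xi i j = 0" by (rule A)
  next
    show "\<exists>i j. i + j = m \<and> bcoeff Xi i j \<noteq> 0" using one by (intro exI[of _ m] exI[of _ 0]) simp
  qed
qed

definition wt :: "nat \<Rightarrow> nat \<Rightarrow> nat \<Rightarrow> int" where
  "wt m i j = int (Suc m) * int i - int m * int j"

lemma wt_add: "wt m (i + i') (j + j') = wt m i j + wt m i' j'"
  by (simp add: wt_def algebra_simps)

lemma wt_split: "i \<le> I \<Longrightarrow> j \<le> J \<Longrightarrow> wt m I J = wt m i j + wt m (I - i) (J - j)"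
  using wt_add[of m i "I - i" j "J - j"] by simp

lemma wt_inj:
  assumes "j \<le> m" "j' \<le> m" "wt m i j = wt m i' j'"
  shows "i = i' \<and> j = j'"
proof -
  define k where "k = (int i - int j) - (int i' - int j')"
  have e: "int (Suc m) * k = int j' - int j" using assms(3) by (simp add: wt_def k_def algebra_simps)
  have "\<not> k \<ge> 1"
  proof
    assume "k \<ge> 1"
    then have "int (Suc m) * k \<ge> int (Suc m)" using mult_left_mono[of 1 k "int (Suc m)"] by simp
    then have "int j' - int j \<ge> int (Suc m)" using e by linarith
    then show False using assms(1,2) by linarith
  qed
  moreover have "\<not> k \<le> -1"
  proof
    assume "k \<le> -1"
    then have "int (Suc m) * k \<le> - int (Suc m)" using mult_left_mono[of k "-1" "int (Suc m)"] by simp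
    then have "int j' - int j \<le> - int (Suc m)" using e by linarith
    then show False using assms(1,2) by linarith
  qed
  ultimately have "k = 0" by linarith
  with e have "j = j'" by simp
  with \<open>k = 0\<close> show ?thesis by (simp add: k_def)
qed

definition umin :: "nat \<Rightarrow> 'a::comm_ring_1 poly poly \<Rightarrow> nat \<Rightarrow> nat \<Rightarrow> bool" where
  "umin m p a b \<longleftrightarrow> bcoeff p a b \<noteq> 0 \<and> (\<forall>i j. bcoeff p i j \<noteq> 0 \<longrightarrow> (i, j) \<noteq> (a, b) \<longrightarrow> wt m i j > wt m a b)"

lemma sum_single_nz:
  assumes "finite A" "x \<in> A" "\<And>y. y \<in> A \<Longrightarrow> y \<noteq> x \<Longrightarrow> f y = 0"
  shows "sum f A = f x"
proof -
  have "sum f A = f x + sum f (A - {x})" using assms(1,2) by (rule sum.remove)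
  also have "sum f (A - {x}) = 0" using assms(3) by (intro sum.neutral) auto
  finally show ?thesis by simp
qed

lemma umin_ge: "umin m p a b \<Longrightarrow> bcoeff p i j \<noteq> 0 \<Longrightarrow> wt m i j \<ge> wt m a b"
  unfolding umin_def by (cases "(i, j) = (a, b)") force+

lemma umin_mult:
  fixes p q :: "'a::idom poly poly"
  assumes P: "umin m p a b" and Q: "umin m q c d"
  shows "umin m (p * q) (a + c) (b + d)"
proof -
  have key: "bcoeff p i j * bcoeff q (a + c - i) (b + d - j) = 0"
    if "i \<le> a + c" "j \<le> b + d" "(i, j) \<noteq> (a, b)" for i j
  proof (rule ccontr)
    assume "bcoeff p i j * bcoeff q (a + c - i) (b + d - j) \<noteq> 0"
    then have n1: "bcoeff p i j \<noteq> 0" and n2: "bcoeff q (a + c - i) (b + d - j) \<noteq> 0" by auto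
    have "wt m i j > wt m a b" using P n1 that(3) by (auto simp: umin_def)
    moreover have "wt m (a + c - i) (b + d - j) \<ge> wt m c d" using umin_ge[OF Q n2] .
    moreover have "wt m (a + c) (b + d) = wt m i j + wt m (a + c - i) (b + d - j)" using that by (intro wt_split)
    moreover have "wt m (a + c) (b + d) = wt m a b + wt m c d" by (rule wt_add)
    ultimately show False by linarith
  qed
  have c1: "bcoeff (p * q) (a + c) (b + d) = bcoeff p a b * bcoeff q c d"
  proof -
    have "bcoeff (p * q) (a + c) (b + d) = (\<Sum>j\<le>b + d. \<Sum>i\<le>a + c. bcoeff p i j * bcoeff q (a + c - i) (b + d - j))"
      by (rule bcoeff_mult)
    also have "\<dots> = (\<Sum>i\<le>a + c. bcoeff p i b * bcoeff q (a + c - i) (b + d - b))"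
    proof (rule sum_single_nz)
      fix j assume "j \<in> {..b + d}" "j \<noteq> b"
      then show "(\<Sum>i\<le>a + c. bcoeff p i j * bcoeff q (a + c - i) (b + d - j)) = 0"
        by (intro sum.neutral ballI key) auto
    qed auto
    also have "\<dots> = bcoeff p a b * bcoeff q (a + c - a) (b + d - b)"
    proof (rule sum_single_nz)
      fix i assume "i \<in> {..a + c}" "i \<noteq> a"
      then show "bcoeff p i b * bcoeff q (a + c - i) (b + d - b) = 0" using key[of i b] by auto
    qed auto
    finally show ?thesis by simp
  qed
  have nz: "bcoeff (p * q) (a + c) (b + d) \<noteq> 0" unfolding c1 using P Q by (simp add: umin_def)
  have gt: "wt m I J > wt m (a + c) (b + d)" if IJ: "bcoeff (p * q) I J \<noteq> 0" "(I, J) \<noteq> (a + c, b + d)" for I J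
  proof -
    from IJ(1) obtain j where j: "j \<in> {..J}" and
      s: "(\<Sum>i\<le>I. bcoeff p i j * bcoeff q (I - i) (J - j)) \<noteq> 0"
      unfolding bcoeff_mult by (auto elim: sum.not_neutral_contains_not_neutral)
    from s obtain i where i: "i \<in> {..I}" and t: "bcoeff p i j * bcoeff q (I - i) (J - j) \<noteq> 0"
      by (auto elim: sum.not_neutral_contains_not_neutral)
    have n1: "bcoeff p i j \<noteq> 0" and n2: "bcoeff q (I - i) (J - j) \<noteq> 0" using t by auto
    have w: "wt m I J = wt m i j + wt m (I - i) (J - j)" using i j by (intro wt_split) auto
    have w2: "wt m (a + c) (b + d) = wt m a b + wt m c d" by (rule wt_add)
    show ?thesis
    proof (cases "(i, j) = (a, b)")
      case True
      then have "(I - i, J - j) \<noteq> (c, d)" using IJ(2) i j by auto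
      then have "wt m (I - i) (J - j) > wt m c d" using Q n2 by (auto simp: umin_def)
      then show ?thesis using True w w2 by auto
    next
      case False
      then have "wt m i j > wt m a b" using P n1 by (auto simp: umin_def)
      moreover have "wt m (I - i) (J - j) \<ge> wt m c d" using umin_ge[OF Q n2] .
      ultimately show ?thesis using w w2 by linarith
    qed
  qed
  show ?thesis unfolding umin_def using nz gt by blast
qed

lemma supp_finite: "finite {(i, j). bcoeff p i j \<noteq> 0}"
proof -
  have "{(i, j). bcoeff p i j \<noteq> 0} \<subseteq> (\<Union>j\<le>degree p. (\<lambda>i. (i, j)) ` {..degree (coeff p j)})"
  proof safe
    fix i j assume "bcoeff p i j \<noteq> 0"
    then have "coeff p j \<noteq> 0" "coeff (coeff p j) i \<noteq> 0" by (auto simp: bcoeff_def)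
    then have "j \<le> degree p" "i \<le> degree (coeff p j)" by (auto intro: le_degree)
    then show "(i, j) \<in> (\<Union>j\<le>degree p. (\<lambda>i. (i, j)) ` {..degree (coeff p j)})" by auto
  qed
  then show ?thesis by (rule finite_subset) auto
qed

lemma umin_exists:
  fixes f :: "'a::comm_ring_1 poly poly"
  assumes "f \<noteq> 0" "degree f \<le> m"
  shows "\<exists>a b. umin m f a b"
proof -
  define S where "S = {(i, j). bcoeff f i j \<noteq> 0}"
  define w where "w = (\<lambda>(i, j). wt m i j)"
  have fin: "finite S" unfolding S_def by (rule supp_finite)
  have "coeff f (degree f) \<noteq> 0" using assms(1) by simp
  then have "coeff (coeff f (degree f)) (degree (coeff f (degree f))) \<noteq> 0" by simp
  then have "(degree (coeff f (degree f)), degree f) \<in> S" unfolding S_def bcoeff_def by simp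
  then have ne: "S \<noteq> {}" by auto
  define mn where "mn = Min (w ` S)"
  have "mn \<in> w ` S" unfolding mn_def using fin ne by (intro Min_in) auto
  then obtain a b where ab: "(a, b) \<in> S" "w (a, b) = mn" by auto
  have le: "mn \<le> w x" if "x \<in> S" for x unfolding mn_def using fin that by (intro Min_le) auto
  have "umin m f a b" unfolding umin_def
  proof (intro conjI allI impI)
    show "bcoeff f a b \<noteq> 0" using ab by (simp add: S_def)
  next
    fix i j assume ij: "bcoeff f i j \<noteq> 0" "(i, j) \<noteq> (a, b)"
    have "wt m a b \<le> wt m i j" using le[of "(i, j)"] ab ij by (simp add: S_def w_def)
    moreover have "j \<le> m" "b \<le> m"
    proof -
      have "coeff f j \<noteq> 0" "coeff f b \<noteq> 0" using ij ab by (auto simp: bcoeff_def S_def)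
      then have "j \<le> degree f" "b \<le> degree f" by (auto intro: le_degree)
      then show "j \<le> m" "b \<le> m" using assms(2) by auto
    qed
    moreover have "wt m i j \<noteq> wt m a b"
    proof
      assume "wt m i j = wt m a b"
      from wt_inj[OF \<open>j \<le> m\<close> \<open>b \<le> m\<close> this] ij(2) show False by simp
    qed
    ultimately show "wt m i j > wt m a b" by linarith
  qed
  then show ?thesis by blast
qed

lemma xi_coeff_zero: "j > Suc m \<Longrightarrow> coeff (xi m) j = 0"
  by (intro poly_eqI) (auto simp: bcoeff_xi[unfolded bcoeff_def] cf_def)

lemma xi_top: "coeff (xi m) (Suc m) = (monom 1 m :: 'a::comm_ring_1 poly)"
  by (intro poly_eqI) (simp add: bcoeff_xi[unfolded bcoeff_def] cf_def)

lemma degree_xi: "degree (xi m :: 'a::comm_ring_1 poly poly) = Suc m"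
proof (rule antisym)
  show "degree (xi m :: 'a poly poly) \<le> Suc m" by (rule degree_le) (simp add: xi_coeff_zero)
  show "Suc m \<le> degree (xi m :: 'a poly poly)" by (rule le_degree) (simp add: xi_top)
qed

lemma xi_nz: "(xi m :: 'a::comm_ring_1 poly poly) \<noteq> 0"
proof
  assume "(xi m :: 'a poly poly) = 0"
  then have "degree (xi m :: 'a poly poly) = 0" by simp
  then show False using degree_xi[of m, where 'a='a] by simp
qed

lemma xi_wt_nonneg: "bcoeff (xi m) i j \<noteq> 0 \<Longrightarrow> wt m i j \<ge> 0"
  by (auto simp: bcoeff_xi cf_def wt_def split: if_splits intro: mult_mono)

lemma cf_00: "m \<ge> 1 \<Longrightarrow> cf m 0 0 \<noteq> (0::'a::idom)"
  by (simp add: cf_def)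

lemma deg0_unit:
  fixes f g :: "'a::field poly poly"
  assumes ac: "alg_closed TYPE('a)" and m: "m \<ge> 1"
    and e: "xi m = f * g" and dg: "degree g = 0"
  shows "g dvd 1"
proof -
  obtain g0 where g0: "g = [:g0:]" using dg by (elim degree_eq_zeroE) simp
  have ce: "coeff (xi m) k = g0 * coeff f k" for k unfolding e g0 by simp
  have "g0 \<noteq> 0" using xi_nz[of m] e g0 by auto
  have "degree g0 = 0"
  proof (rule ccontr)
    assume "degree g0 \<noteq> 0"
    then obtain z where z: "poly g0 z = 0" using ac unfolding alg_closed_def by auto
    have "poly (coeff (xi m) (Suc m)) z = 0" unfolding ce using z by simp
    then have "z ^ m = 0" by (simp add: xi_top poly_monom)
    then have z0: "z = 0" by simp
    have "poly (coeff (xi m :: 'a poly poly) 0) 0 = 0" using z z0 by (simp add: ce)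
    moreover have "poly (coeff (xi m :: 'a poly poly) 0) 0 = cf m 0 0" by (simp add: poly_0_coeff_0 bcoeff_xi[unfolded bcoeff_def])
    ultimately show False using cf_00[OF m, where 'a='a] by simp
  qed
  then have "g0 dvd 1" using \<open>g0 \<noteq> 0\<close> by (simp add: is_unit_iff_degree)
  then show ?thesis unfolding g0 by (simp add: is_unit_const_poly_iff)
qed

lemma xi_irreducible:
  fixes m :: nat
  assumes ac: "alg_closed TYPE('a::field)" and m: "m \<ge> 1"
  shows "irreducible (xi m :: 'a poly poly)"
proof (rule irreducibleI)
  show "(xi m :: 'a poly poly) \<noteq> 0" by (rule xi_nz)
  show "\<not> (xi m :: 'a poly poly) dvd 1"
  proof
    assume "(xi m :: 'a poly poly) dvd 1"
    then have "degree (xi m :: 'a poly poly) = 0" by (auto simp: is_unit_poly_iff)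
    then show False using degree_xi[of m, where 'a='a] by simp
  qed
  fix f g :: "'a poly poly" assume e: "xi m = f * g"
  have fz: "f \<noteq> 0" "g \<noteq> 0" using e xi_nz[of m, where 'a='a] by auto
  have dsum: "degree f + degree g = Suc m" using degree_mult_eq[OF fz] e degree_xi[of m, where 'a='a] by simp
  show "f dvd 1 \<or> g dvd 1"
  proof (cases "degree f \<le> m \<and> degree g \<le> m")
    case True
    obtain a b where ab: "umin m f a b" using umin_exists[OF fz(1)] True by blast
    obtain c d where cd: "umin m g c d" using umin_exists[OF fz(2)] True by blast
    have u: "umin m (xi m :: 'a poly poly) (a + c) (b + d)" unfolding e by (rule umin_mult[OF ab cd])
    have nn: "wt m (a + c) (b + d) \<ge> 0" using u xi_wt_nonneg by (auto simp: umin_def)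
    have z1: "bcoeff (xi m :: 'a poly poly) 0 0 \<noteq> 0" using cf_00[OF m] by (simp add: bcoeff_xi)
    have z2: "bcoeff (xi m :: 'a poly poly) m (Suc m) \<noteq> 0" by (simp add: bcoeff_xi cf_def)
    have w1: "wt m 0 0 = 0" and w2: "wt m m (Suc m) = 0" by (simp_all add: wt_def)
    have "(0, 0) = (a + c, b + d)"
    proof (rule ccontr)
      assume "(0, 0) \<noteq> (a + c, b + d)"
      then have "wt m 0 0 > wt m (a + c) (b + d)" using u z1 by (auto simp: umin_def)
      then show False using nn w1 by simp
    qed
    moreover have "(m, Suc m) \<noteq> (0, 0)" by simp
    ultimately have "wt m m (Suc m) > wt m (a + c) (b + d)" using u z2 by (auto simp: umin_def)
    then have False using nn w2 by simp
    then show ?thesis ..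
  next
    case False
    then have "degree g = 0 \<or> degree f = 0" using dsum by auto
    then show ?thesis
    proof
      assume "degree g = 0" then show ?thesis using deg0_unit[OF ac m e] by simp
    next
      assume "degree f = 0" then show ?thesis using deg0_unit[OF ac m, of g f] e by (simp add: mult.commute)
    qed
  qed
qed

abbreviation TT :: "nat \<Rightarrow> (real \<times> real) set" where
  "TT m \<equiv> convex hull {(0, 0), (real m - 1, 0), (real m, real m + 1)}"

lemma inT:
  fixes i j m :: nat
  assumes "j \<le> i" "i < m"
  shows "(real i, real j) \<in> TT m"
proof (cases "m = 1")
  case True
  then have "i = 0" "j = 0" using assms by auto
  then show ?thesis by (intro hull_inc) simp
next
  case False
  then have m2: "real m \<ge> 2" using assms by simp
  define M where "M = real m"
  define I where "I = real i"
  define J where "J = real j"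
  have JI: "J \<le> I" and IM: "I \<le> M - 1" using assms by (simp_all add: I_def J_def M_def)
  have J0: "J \<ge> 0" by (simp add: J_def)
  define w where "w = J / (M + 1)"
  define v where "v = (I - w * M) / (M - 1)"
  define u where "u = 1 - v - w"
  have Mp: "M - 1 > 0" "M + 1 > 0" using m2 by (simp_all add: M_def)
  have w0: "w \<ge> 0" using J0 Mp by (simp add: w_def)
  have wJ: "w * (M + 1) = J" using Mp by (simp add: w_def)
  have vI: "v * (M - 1) = I - w * M" using Mp by (simp add: v_def)
  have "w * M \<le> J" using wJ w0 by (simp add: algebra_simps)
  then have "I - w * M \<ge> 0" using JI by simp
  then have v0: "v \<ge> 0" using Mp by (simp add: v_def)
  have "v * (M - 1) \<le> (1 - w) * (M - 1)" using vI IM wJ w0 by (simp add: algebra_simps)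
  then have "v \<le> 1 - w" using Mp by simp
  then have u0: "u \<ge> 0" by (simp add: u_def)
  have eq: "(real i, real j) = u *\<^sub>R (0, 0) + v *\<^sub>R (real m - 1, 0) + w *\<^sub>R (real m, real m + 1)"
    using vI wJ by (simp add: I_def J_def M_def algebra_simps)
  show ?thesis unfolding convex_hull_3 using u0 v0 w0 eq
    by (intro CollectI exI[of _ u] exI[of _ v] exI[of _ w]) (simp add: u_def)
qed

lemma cf_nz: "j \<le> i \<Longrightarrow> i < m \<Longrightarrow> cf m i j \<noteq> (0::'a::{idom,ring_char_0})"
  by (simp add: cf_def)

lemma newton_xi:
  assumes m: "m \<ge> 1"
  shows "newton_polygon (xi m :: 'a::{idom,ring_char_0} poly poly) = TT m"
proof
  define Sx where "Sx = {(real i, real j) | i j. bcoeff (xi m :: 'a poly poly) i j \<noteq> 0}"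
  have "Sx \<subseteq> TT m"
  proof
    fix x assume "x \<in> Sx"
    then obtain i j where x: "x = (real i, real j)" and nz: "cf m i j \<noteq> (0::'a)" by (auto simp: Sx_def bcoeff_xi)
    then have "(i = m \<and> j = Suc m) \<or> (j \<le> i \<and> i < m)" by (auto simp: cf_def split: if_splits)
    then show "x \<in> TT m"
    proof
      assume "i = m \<and> j = Suc m" then show ?thesis unfolding x by (intro hull_inc) simp
    next
      assume "j \<le> i \<and> i < m" then show ?thesis unfolding x by (intro inT) auto
    qed
  qed
  then show "newton_polygon (xi m :: 'a poly poly) \<subseteq> TT m"
    unfolding newton_polygon_def Sx_def[symmetric] by (intro hull_minimal) (auto intro: convex_convex_hull)
  have "{(0, 0), (real m - 1, 0), (real m, real m + 1)} \<subseteq> Sx"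
  proof -
    have "(real 0, real 0) \<in> Sx" using cf_nz[of 0 0 m, where 'a='a] m by (auto simp: Sx_def bcoeff_xi)
    moreover have "(real (m - 1), real (0::nat)) \<in> Sx" unfolding Sx_def using cf_nz[of 0 "m - 1" m, where 'a='a] m
      by (intro CollectI exI[of _ "m - 1"] exI[of _ "0::nat"]) (simp add: bcoeff_xi)
    moreover have "(real m, real (Suc m)) \<in> Sx" by (auto simp: Sx_def bcoeff_xi cf_def)
    ultimately show ?thesis using m by (simp add: of_nat_diff add.commute)
  qed
  then show "TT m \<subseteq> newton_polygon (xi m :: 'a poly poly)"
    unfolding newton_polygon_def Sx_def[symmetric] by (rule hull_mono)
qed

lemma choose_if: "(if a \<le> i then (of_nat (i choose a)::'a::semiring_1) else 0) = of_nat (i choose a)"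
  by (simp add: binomial_eq_0)

lemma pcompose_monom: "pcompose (monom c n) r = smult c (r ^ n)"
  by (induction n) (simp_all add: monom_0 monom_Suc pcompose_pCons)

lemma pc_taylor:
  fixes q :: "'a::comm_ring_1 poly"
  assumes "degree q \<le> N"
  shows "coeff (pcompose q [:1, 1:]) a = (\<Sum>i\<le>N. coeff q i * of_nat (i choose a))"
proof -
  have "pcompose q [:1, 1:] = pcompose (\<Sum>i\<le>N. monom (coeff q i) i) [:1, 1:]"
    by (simp only: poly_as_sum_of_monoms'[OF assms])
  also have "\<dots> = (\<Sum>i\<le>N. smult (coeff q i) ([:1, 1:] ^ i))"
    by (simp add: pcompose_sum pcompose_monom)
  moreover have "coeff ([:1, 1:] ^ i) a = (of_nat (i choose a) :: 'a)" for i
    by (simp add: coeff_lin_pow binomial_eq_0)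
  ultimately show ?thesis by (simp add: coeff_sum)
qed

lemma bb_taylor:
  fixes p :: "'a::comm_ring_1 poly poly"
  assumes "degree p \<le> N" "\<And>j. degree (coeff p j) \<le> N"
  shows "bcoeff (BB p) a b = (\<Sum>j\<le>N. \<Sum>i\<le>N. bcoeff p i j * of_nat (i choose a) * of_nat (j choose b))"
proof -
  have one: "[:[:1:], 1:] = ([:1, 1:] :: 'a poly poly)" by (simp add: one_pCons)
  have dm: "degree (map_poly (\<lambda>s. pcompose s [:1, 1:]) p) \<le> N"
    using assms(1) by (intro degree_le allI impI) (simp add: coeff_map_poly coeff_eq_0)
  have "coeff (BB p) b = (\<Sum>j\<le>N. coeff (map_poly (\<lambda>s. pcompose s [:1, 1:]) p) j * of_nat (j choose b))"
    unfolding BB_def bshift_def one by (rule pc_taylor[OF dm])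
  also have "\<dots> = (\<Sum>j\<le>N. smult (of_nat (j choose b)) (pcompose (coeff p j) [:1, 1:]))"
    by (simp add: coeff_map_poly of_nat_mult_conv_smult mult.commute)
  finally have "bcoeff (BB p) a b = (\<Sum>j\<le>N. of_nat (j choose b) * coeff (pcompose (coeff p j) [:1, 1:]) a)"
    by (simp add: bcoeff_def coeff_sum)
  also have "\<dots> = (\<Sum>j\<le>N. of_nat (j choose b) * (\<Sum>i\<le>N. coeff (coeff p j) i * of_nat (i choose a)))"
    using pc_taylor[OF assms(2)] by simp
  also have "\<dots> = (\<Sum>j\<le>N. \<Sum>i\<le>N. bcoeff p i j * of_nat (i choose a) * of_nat (j choose b))"
    by (simp add: sum_distrib_left bcoeff_def mult_ac)
  finally show ?thesis .
qed

lemma nat_choose_id: "j * (j choose b) = Suc b * (j choose Suc b) + b * (j choose b)"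
proof (cases "b \<le> j")
  case True
  have "Suc b * (j choose Suc b) = (j - b) * (j choose b)"
    unfolding binomial_absorption binomial_absorb_comp ..
  moreover have "(j - b) * x + b * x = j * x" for x
    using True by (metis add_mult_distrib le_add_diff_inverse2)
  ultimately show ?thesis by simp
next
  case False
  then show ?thesis by (simp add: binomial_eq_0)
qed

lemma of_choose_id:
  fixes x :: "'a::comm_ring_1"
  shows "(of_nat k - of_nat i) * x * of_nat (i choose a) =
   of_nat k * (x * of_nat (i choose a)) - of_nat (Suc a) * (x * of_nat (i choose Suc a)) - of_nat a * (x * of_nat (i choose a))"
proof -
  have "of_nat i * of_nat (i choose a) = (of_nat (Suc a) * of_nat (i choose Suc a) + of_nat a * of_nat (i choose a) :: 'a)"
    using arg_cong[OF nat_choose_id[of i a], of "of_nat :: nat \<Rightarrow> 'a"] by (simp only: of_nat_mult of_nat_add)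
  then have h: "of_nat i * of_nat (i choose a) = (of_nat (Suc a) * of_nat (i choose Suc a) + of_nat a * of_nat (i choose a) :: 'a)" .
  have "(of_nat k - of_nat i) * x * of_nat (i choose a) = of_nat k * (x * of_nat (i choose a)) - x * (of_nat i * of_nat (i choose a))"
    by (simp add: algebra_simps)
  also have "\<dots> = of_nat k * (x * of_nat (i choose a)) - x * (of_nat (Suc a) * of_nat (i choose Suc a) + of_nat a * of_nat (i choose a))"
    by (simp only: h)
  also have "\<dots> = of_nat k * (x * of_nat (i choose a)) - of_nat (Suc a) * (x * of_nat (i choose Suc a)) - of_nat a * (x * of_nat (i choose a))"
    by (simp add: algebra_simps)
  finally show ?thesis .
qed

lemma uni1:
  fixes d :: "nat \<Rightarrow> 'a::field_char_0"
  assumes "\<And>j. d j \<noteq> 0 \<Longrightarrow> j < n" "n \<le> Suc N"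
    "\<And>b. b < n \<Longrightarrow> (\<Sum>j\<le>N. d j * of_nat (j choose b)) = 0"
  shows "d j = 0"
  using assms
proof (induction n arbitrary: d j)
  case 0 then show ?case by force
next
  case (Suc k)
  define d' where "d' j = (of_nat k - of_nat j) * d j" for j
  have d'0: "d' j = 0" for j
  proof (rule Suc.IH)
    fix j assume "d' j \<noteq> 0"
    then have "d j \<noteq> 0" "j \<noteq> k" by (auto simp: d'_def)
    then show "j < k" using Suc.prems(1) by force
  next
    show "k \<le> Suc N" using Suc.prems(2) by simp
  next
    fix b assume b: "b < k"
    have "(\<Sum>j\<le>N. d' j * of_nat (j choose b)) =
      of_nat k * (\<Sum>j\<le>N. d j * of_nat (j choose b)) - of_nat (Suc b) * (\<Sum>j\<le>N. d j * of_nat (j choose Suc b))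
      - of_nat b * (\<Sum>j\<le>N. d j * of_nat (j choose b))"
      by (simp add: d'_def of_choose_id sum_subtractf sum_distrib_left)
    also have "\<dots> = 0" using Suc.prems(3)[of b] Suc.prems(3)[of "Suc b"] b by simp
    finally show "(\<Sum>j\<le>N. d' j * of_nat (j choose b)) = 0" .
  qed
  have z: "d j = 0" if "j \<noteq> k" for j using d'0[of j] that by (simp add: d'_def)
  have "(\<Sum>j\<le>N. d j * of_nat (j choose 0)) = d k * of_nat (k choose 0)"
    using Suc.prems(2) by (intro sum_single_nz) (auto simp: z)
  then have "d k = 0" using Suc.prems(3)[of 0] by simp
  show ?case
  proof (cases "j = k")
    case True then show ?thesis using \<open>d k = 0\<close> by simp
  next
    case False then show ?thesis by (rule z)
  qed
qed

lemma uni2: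
  fixes c :: "nat \<Rightarrow> nat \<Rightarrow> 'a::field_char_0"
  assumes "\<And>i j. c i j \<noteq> 0 \<Longrightarrow> j \<le> i \<and> i < n" "n \<le> Suc N"
    "\<And>a b. a + b < n \<Longrightarrow> (\<Sum>j\<le>N. \<Sum>i\<le>N. c i j * of_nat (i choose a) * of_nat (j choose b)) = 0"
  shows "c i j = 0"
  using assms
proof (induction n arbitrary: c i j)
  case 0 then show ?case by force
next
  case (Suc k)
  define c' where "c' i j = (of_nat k - of_nat i) * c i j" for i j
  have c'0: "c' i j = 0" for i j
  proof (rule Suc.IH)
    fix i j assume "c' i j \<noteq> 0"
    then have "c i j \<noteq> 0" "i \<noteq> k" by (auto simp: c'_def)
    then show "j \<le> i \<and> i < k" using Suc.prems(1) by force
  next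
    show "k \<le> Suc N" using Suc.prems(2) by simp
  next
    fix a b assume ab: "a + b < k"
    have "(\<Sum>j\<le>N. \<Sum>i\<le>N. c' i j * of_nat (i choose a) * of_nat (j choose b)) =
      of_nat k * (\<Sum>j\<le>N. \<Sum>i\<le>N. c i j * of_nat (i choose a) * of_nat (j choose b))
      - of_nat (Suc a) * (\<Sum>j\<le>N. \<Sum>i\<le>N. c i j * of_nat (i choose Suc a) * of_nat (j choose b))
      - of_nat a * (\<Sum>j\<le>N. \<Sum>i\<le>N. c i j * of_nat (i choose a) * of_nat (j choose b))"
    proof -
      have "c' i j * of_nat (i choose a) * of_nat (j choose b) =
        of_nat k * (c i j * of_nat (i choose a) * of_nat (j choose b))
        - of_nat (Suc a) * (c i j * of_nat (i choose Suc a) * of_nat (j choose b))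
        - of_nat a * (c i j * of_nat (i choose a) * of_nat (j choose b))" for i j
        using arg_cong[OF of_choose_id[of k i "c i j" a], of "\<lambda>x. x * of_nat (j choose b)"]
        by (simp add: c'_def algebra_simps)
      then show ?thesis by (simp add: sum_subtractf sum_distrib_left)
    qed
    also have "\<dots> = 0" using Suc.prems(3)[of a b] Suc.prems(3)[of "Suc a" b] ab by simp
    finally show "(\<Sum>j\<le>N. \<Sum>i\<le>N. c' i j * of_nat (i choose a) * of_nat (j choose b)) = 0" .
  qed
  have z: "c i j = 0" if "i \<noteq> k" for i j using c'0[of i j] that by (simp add: c'_def)
  have inner: "(\<Sum>i\<le>N. c i j * of_nat (j choose b)) = c k j * of_nat (j choose b)" for j b
    using Suc.prems(2) by (intro sum_single_nz) (auto simp: z)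
  have "c k j = 0" for j
  proof (rule uni1[of "c k" "Suc k" N])
    fix j assume "c k j \<noteq> 0" then show "j < Suc k" using Suc.prems(1) by force
  next
    show "Suc k \<le> Suc N" by (rule Suc.prems(2))
  next
    fix b assume "b < Suc k"
    then show "(\<Sum>j\<le>N. c k j * of_nat (j choose b)) = 0" using Suc.prems(3)[of 0 b] by (simp add: inner)
  qed
  show ?case
  proof (cases "i = k")
    case True then show ?thesis using \<open>\<And>j. c k j = 0\<close> by simp
  next
    case False then show ?thesis by (rule z)
  qed
qed

lemma supp_from_T:
  fixes eta :: "'a::zero poly poly"
  assumes m: "m \<ge> 1" and np: "newton_polygon eta = TT m" and nz: "bcoeff eta i j \<noteq> 0"
  shows "(j \<le> i \<and> i < m) \<or> (i = m \<and> j = Suc m)"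
proof -
  have "(real i, real j) \<in> newton_polygon eta" unfolding newton_polygon_def using nz by (intro hull_inc) auto
  then have "(real i, real j) \<in> TT m" using np by simp
  then obtain u v w where uvw: "0 \<le> u" "0 \<le> v" "0 \<le> w" "u + v + w = 1"
    and eq: "(real i, real j) = u *\<^sub>R (0, 0) + v *\<^sub>R (real m - 1, 0) + w *\<^sub>R (real m, real m + 1)"
    unfolding convex_hull_3 by blast
  define M where "M = real m"
  have M1: "M \<ge> 1" using m by (simp add: M_def)
  have I: "real i = v * (M - 1) + w * M" and J: "real j = w * M + w"
    using eq by (simp_all add: M_def algebra_simps)
  show ?thesis
  proof (cases "w = 1")
    case True
    then have "u = 0" "v = 0" using uvw by linarith+
    then have "real i = M" "real j = M + 1" using I J True by simp_all
    then have "i = m" "j = Suc m" by (simp_all add: M_def)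
    then show ?thesis by simp
  next
    case False
    then have w1: "w < 1" using uvw by linarith
    have A0: "v * (M - 1) \<ge> 0" using uvw M1 by simp
    have "v * (M - 1) \<le> (1 - w) * (M - 1)" using uvw M1 by (intro mult_right_mono) auto
    then have A1: "v * (M - 1) \<le> M - 1 - w * M + w" by (simp add: algebra_simps)
    have "real i < M" using I A1 w1 by linarith
    then have "i < m" by (simp add: M_def)
    moreover have "real j < real i + 1" using I J A0 w1 by linarith
    then have "j \<le> i" by simp
    ultimately show ?thesis by simp
  qed
qed

lemma xi_low: "bcoeff (BB (xi m :: 'a::idom poly poly)) a b = 0" if "a + b < m"
  using xi_vanish[of m, where 'a='a] that unfolding vanishes_to_order_def by (simp add: BB_def)

lemma uniqueness:
  fixes eta :: "'a::field_char_0 poly poly"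
  assumes m: "m \<ge> 1" and van: "vanishes_to_order eta (1, 1) m" and np: "newton_polygon eta = TT m"
  shows "\<exists>c. c \<noteq> 0 \<and> eta = [:[:c:]:] * xi m"
proof -
  define c where "c = bcoeff eta m (Suc m)"
  define z where "z = eta - [:[:c:]:] * xi m"
  have bz: "bcoeff z i j = bcoeff eta i j - c * cf m i j" for i j
    by (simp add: z_def bcoeff_xi[unfolded bcoeff_def] bcoeff_const_mult[unfolded bcoeff_def] bcoeff_def)
  have supp: "j \<le> i \<and> i < m" if "bcoeff z i j \<noteq> 0" for i j
  proof (rule ccontr)
    assume no: "\<not> (j \<le> i \<and> i < m)"
    show False
    proof (cases "i = m \<and> j = Suc m")
      case True then show False using that by (simp add: bz c_def cf_def)
    next
      case False
      then have "bcoeff eta i j = 0" using supp_from_T[OF m np] no by blast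
      moreover have "cf m i j = (0::'a)" using False no by (simp add: cf_def)
      ultimately show False using that by (simp add: bz)
    qed
  qed
  have cz: "coeff (coeff z j) i = 0" if "\<not> (j \<le> i \<and> i < m)" for i j
    using supp[of i j] that by (auto simp: bcoeff_def)
  have dz: "degree z \<le> m"
    by (intro degree_le allI impI poly_eqI) (simp add: cz)
  have dcz: "degree (coeff z j) \<le> m" for j
    by (intro degree_le allI impI) (simp add: cz)
  have BBz: "BB z = BB eta - [:[:c:]:] * BB (xi m)"
    by (simp only: z_def BB_diff BB_mult BB_const)
  have "bcoeff z i j = 0" for i j
  proof (rule uni2[of "\<lambda>i j. bcoeff z i j" m m])
    fix i j assume "bcoeff z i j \<noteq> 0" then show "j \<le> i \<and> i < m" by (rule supp)
  next
    show "m \<le> Suc m" by simp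
  next
    fix a b assume ab: "a + b < m"
    have "bcoeff (BB eta) a b = 0" using van ab unfolding vanishes_to_order_def by (simp add: BB_def)
    then have "bcoeff (BB z) a b = 0" unfolding BBz using xi_low[OF ab, where 'a='a]
      by (simp add: bcoeff_const_mult[unfolded bcoeff_def] bcoeff_def)
    then show "(\<Sum>j\<le>m. \<Sum>i\<le>m. bcoeff z i j * of_nat (i choose a) * of_nat (j choose b)) = 0"
      using bb_taylor[OF dz dcz] by simp
  qed
  then have "z = 0" by (intro poly_eqI) (simp add: bcoeff_def)
  then have e: "eta = [:[:c:]:] * xi m" by (simp add: z_def)
  have "c \<noteq> 0"
  proof
    assume "c = 0"
    then have "eta = 0" using e by simp
    then have "newton_polygon eta = {}" by (simp add: newton_polygon_def bcoeff_def)
    moreover have "(0, 0) \<in> TT m" by (intro hull_inc) simp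
    ultimately show False using np by simp
  qed
  then show ?thesis using e by blast
qed

theorem theorem1p1:
  fixes m :: nat
  assumes "alg_closed TYPE('a::field_char_0)"
    and "m \<ge> 1"
  shows "\<exists>\<xi> :: 'a poly poly.
           irreducible \<xi> \<and>
           vanishes_to_order \<xi> (1, 1) m \<and>
           newton_polygon \<xi> = convex hull {(0, 0), (real m - 1, 0), (real m, real m + 1)} \<and>
           (\<forall>\<eta> :: 'a poly poly.
              irreducible \<eta> \<and> vanishes_to_order \<eta> (1, 1) m \<and>
              newton_polygon \<eta> = convex hull {(0, 0), (real m - 1, 0), (real m, real m + 1)}
              \<longrightarrow> (\<exists>c::'a. c \<noteq> 0 \<and> \<eta> = [:[:c:]:] * \<xi>))"
proof (intro exI[of _ "xi m"] conjI allI impI)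
  show "irreducible (xi m :: 'a poly poly)" by (rule xi_irreducible[OF assms])
  show "vanishes_to_order (xi m :: 'a poly poly) (1, 1) m" by (rule xi_vanish)
  show "newton_polygon (xi m :: 'a poly poly) = TT m" by (rule newton_xi[OF assms(2)])
  fix eta :: "'a poly poly"
  assume "irreducible eta \<and> vanishes_to_order eta (1, 1) m \<and> newton_polygon eta = TT m"
  then show "\<exists>c. c \<noteq> 0 \<and> eta = [:[:c:]:] * xi m" using uniqueness[OF assms(2)] by blast
qed

end
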